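(* In the setting described in the context (either all transition matrices symmetric, or all skew-symmetric), fix the codes $z_{j,i}$, all data systems and all dictionary atoms other than $D_r$. Then the sub-problem of minimizing $\Gamma_r$ over the atom $D_r=(A_r,C_r)$ subject to $C_r^{\mathrm T}C_r=I_n$ and $A_r$ strictly stable is equivalent to $$\min_{U_r^{(d)},\Lambda_r^{(d)}}\ \sum_{k=1}^n [U_r^{(d)}]_k^{*}\,S_{r,k}\,[U_r^{(d)}]_k\quad\text{s.t.}\quad (U_r^{(d)})^{*}U_r^{(d)}=I_n,\ \ |[\Lambda_r^{(d)}]_k|<1\ (1\le k\le n),$$ over canonical tuples $(\Lambda_r^{(d)},U_r^{(d)})$ of $D_r$; here the matrices $S_{r,k}$ do not depend on the measurement matrix $U_r^{(d)}$.
   Context: A system tuple $(A,C)$ has $A\in\mathbb{R}^{n\times n}$ strictly stable (eigenvalues of modulus $<1$) and $C\in\mathbb{R}^{m\times n}$ with $C^{\mathrm T}C=I_n$; tuples $(A,C)$ and $(P^{*}AP,CP)$, $P$ unitary, describe the same system. For symmetric or skew-symmetric $A$ a canonical tuple is $(\Lambda,U)$ with $\Lambda=P^{*}AP$ diagonal and $U=CP$, $U^{*}U=I_n$, for some unitary $P$. Extended observability matrix: $O=[C;CA;CA^2;\dots]$; with the SVD $O^{*}O=U_oS_oU_o^{*}$, $L=U_oS_o^{1/2}$ and $V=OL^{-\mathrm T}$ (orthonormal columns). Kernel between systems: $k(X_1,X_2)=\|V_1^{*}V_2\|_F^2$ (independent of the chosen representative). Data: systems $X_1,\dots,X_N$ with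 canonical tuples $(\Lambda_i^{(x)},U_i^{(x)})$; dictionary atoms $D_1,\dots,D_J$ with canonical tuples $(\Lambda_j^{(d)},U_j^{(d)})$; real codes $z_{j,i}$. Dictionary-learning objective $\sum_i\|\Pi(X_i)-\sum_j z_{j,i}\Pi(D_j)\|_F^2$ with $\Pi(V)=VV^{\mathrm T}$; the part depending on $D_r$ is (up to a factor 2 and constants) $\Gamma_r=\sum_{i=1}^N z_{r,i}\big(\sum_{j\ne r}z_{j,i}k(D_r,D_j)-k(D_r,X_i)\big)$. Notation: $[X]_k$ is the $k$-th column of $X$, or the $k$-th diagonal entry if $X$ is diagonal. For $\lambda\in\mathbb{C}$ and diagonal $\Lambda$ with entries $\lambda_1,\dots,\lambda_n$, $E(\lambda,\Lambda)=\mathrm{diag}\Big(\frac{(1-|\lambda|^2)(1-|\lambda_l|^2)}{|1-\lambda\lambda_l^{*}|^2}\Big)_{l=1}^n$. Set $F_{r,j,k}=U_j^{(d)}E([\Lambda_r^{(d)}]_k,\Lambda_j^{(d)})(U_j^{(d)})^{*}$, $F'_{r,i,k}=U_i^{(x)}E([\Lambda_r^{(d)}]_k,\Lambda_i^{(x)})(U_i^{(x)})^{*}$, and $S_{r,k}=\sum_{i=1}^N z_{r,i}\big(\sum_{j\ne r}z_{j,i}F_{r,j,k}-F'_{r,i,k}\big)$. *)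

theory Defs
  imports "HOL-Analysis.Analysis"
begin

section \<open>Matrix helpers (type-indexed dimensions: 'n = state dim n, 'm = output dim m)\<close>

fun mpow :: "('a::comm_ring_1)^'n^'n \<Rightarrow> nat \<Rightarrow> 'a^'n^'n" where
  "mpow A 0 = mat 1"
| "mpow A (Suc k) = A ** mpow A k"

definition cpx :: "real^'c^'r \<Rightarrow> complex^'c^'r" where
  "cpx M = (\<chi> i j. complex_of_real (M $ i $ j))"

definition adj :: "complex^'c^'r \<Rightarrow> complex^'r^'c" where
  "adj M = (\<chi> i j. cnj (M $ j $ i))"

definition cdiag :: "complex^'n \<Rightarrow> complex^'n^'n" where
  "cdiag v = (\<chi> i j. if i = j then v $ i else 0)"

definition unitary :: "complex^'n^'n \<Rightarrow> bool" where
  "unitary P \<longleftrightarrow> adj P ** P = mat 1"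

definition strictly_stable :: "real^'n^'n \<Rightarrow> bool" where
  "strictly_stable A \<longleftrightarrow>
     (\<forall>(\<mu>::complex) (v::complex^'n). v \<noteq> 0 \<and> cpx A *v v = \<mu> *s v \<longrightarrow> cmod \<mu> < 1)"

definition admissible :: "bool \<Rightarrow> real^'n^'n \<Rightarrow> real^'n^'m \<Rightarrow> bool" where
  "admissible sk A C \<longleftrightarrow>
     (if sk then transpose A = - A else transpose A = A) \<and> strictly_stable A
     \<and> transpose C ** C = mat 1"

text \<open>Block row t of O = [C; CA; CA^2; ...].\<close>
definition obs :: "real^'n^'n \<Rightarrow> real^'n^'m \<Rightarrow> nat \<Rightarrow> real^'n^'m" where
  "obs A C t = C ** mpow A t"

text \<open>O1^T O2 = sum_t (C1 A1^t)^T (C2 A2^t).\<close>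
definition gram :: "real^'n^'n \<Rightarrow> real^'n^'m \<Rightarrow> real^'n^'n \<Rightarrow> real^'n^'m \<Rightarrow> real^'n^'n" where
  "gram A1 C1 A2 C2 = (\<Sum>t. transpose (obs A1 C1 t) ** obs A2 C2 t)"

definition Lfac :: "real^'n^'n \<Rightarrow> real^'n^'m \<Rightarrow> real^'n^'n" where
  "Lfac A C = (SOME L. \<exists>Uo So. orthogonal_matrix Uo
       \<and> (\<forall>i j. i \<noteq> j \<longrightarrow> So $ i $ j = 0) \<and> (\<forall>i. So $ i $ i \<ge> 0)
       \<and> gram A C A C = Uo ** So ** transpose Uo
       \<and> L = Uo ** (\<chi> i j. sqrt (So $ i $ j)))"

text \<open>Block row t of V = O L^(-T).\<close>
definition Vblk :: "real^'n^'n \<Rightarrow> real^'n^'m \<Rightarrow> nat \<Rightarrow> real^'n^'m" where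
  "Vblk A C t = obs A C t ** transpose (matrix_inv (Lfac A C))"

definition frob2 :: "real^'c^'r \<Rightarrow> real" where
  "frob2 M = (\<Sum>i\<in>UNIV. \<Sum>j\<in>UNIV. (M $ i $ j)^2)"

definition kernel :: "((real^'n^'n) \<times> (real^'n^'m)) \<Rightarrow> ((real^'n^'n) \<times> (real^'n^'m)) \<Rightarrow> real" where
  "kernel X1 X2 = frob2 (\<Sum>t. transpose (Vblk (fst X1) (snd X1) t) ** Vblk (fst X2) (snd X2) t)"

definition Gamma ::
  "(nat \<Rightarrow> nat \<Rightarrow> real) \<Rightarrow> (nat \<Rightarrow> (real^'n^'n) \<times> (real^'n^'m)) \<Rightarrow> (nat \<Rightarrow> (real^'n^'n) \<times> (real^'n^'m))
    \<Rightarrow> nat \<Rightarrow> nat \<Rightarrow> nat \<Rightarrow> real" where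
  "Gamma z X D N J r = (\<Sum>i<N. z r i *
      ((\<Sum>j\<in>{..<J} - {r}. z j i * kernel (D r) (D j)) - kernel (D r) (X i)))"

definition canonical :: "real^'n^'n \<Rightarrow> real^'n^'m \<Rightarrow> complex^'n \<Rightarrow> complex^'n^'m \<Rightarrow> bool" where
  "canonical A C lam U \<longleftrightarrow>
     (\<exists>P. unitary P \<and> adj P ** cpx A ** P = cdiag lam \<and> U = cpx C ** P)"

definition Emat :: "complex \<Rightarrow> complex^'n \<Rightarrow> complex^'n^'n" where
  "Emat la lam = cdiag (\<chi> l. complex_of_real
      ((1 - (cmod la)^2) * (1 - (cmod (lam $ l))^2) / (cmod (1 - la * cnj (lam $ l)))^2))"

definition Fmat :: "complex^'n^'m \<Rightarrow> complex \<Rightarrow> complex^'n \<Rightarrow> complex^'m^'m" where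
  "Fmat U la lam = U ** Emat la lam ** adj U"

text \<open>S_{r,k}; lamr is Lambda_r^(d); it does not involve U_r^(d).\<close>
definition Smat ::
  "(nat \<Rightarrow> nat \<Rightarrow> real) \<Rightarrow> (nat \<Rightarrow> complex^'n) \<Rightarrow> (nat \<Rightarrow> complex^'n^'m)
    \<Rightarrow> (nat \<Rightarrow> complex^'n) \<Rightarrow> (nat \<Rightarrow> complex^'n^'m)
    \<Rightarrow> nat \<Rightarrow> nat \<Rightarrow> nat \<Rightarrow> complex^'n \<Rightarrow> 'n \<Rightarrow> complex^'m^'m" where
  "Smat z lamX UX lamD UD N J r lamr k = (\<Sum>i<N. z r i *\<^sub>R
      ((\<Sum>j\<in>{..<J} - {r}. z j i *\<^sub>R Fmat (UD j) (lamr $ k) (lamD j))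
        - Fmat (UX i) (lamr $ k) (lamX i)))"

definition quad :: "complex^'m \<Rightarrow> complex^'m^'m \<Rightarrow> complex" where
  "quad u S = (\<Sum>l\<in>UNIV. cnj (u $ l) * ((S *v u) $ l))"

end

theory Submission
  imports Defs
begin

class rcl0 = real_normed_field + euclidean_space

class rcl = rcl0 +
  fixes cj :: "'a \<Rightarrow> 'a"
  assumes cj_cj[simp]: "cj (cj x) = x"
  and cj_add: "cj (x + y) = cj x + cj y"
  and cj_mult: "cj (x * y) = cj x * cj y"
  and cj_scaleR_one: "cj (r *\<^sub>R 1) = r *\<^sub>R 1"
  and inner_cj: "inner x y = inner 1 (cj x * y)"
  and cj_mult_self: "cj x * x = ((norm x)\<^sup>2) *\<^sub>R 1"

instance real :: rcl0 ..
instance complex :: rcl0 ..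

instantiation real :: rcl begin
definition cj_real :: "real \<Rightarrow> real" where "cj_real x = x"
instance by standard (simp_all add: cj_real_def power2_eq_square)
end

instantiation complex :: rcl begin
definition cj_complex :: "complex \<Rightarrow> complex" where "cj_complex x = cnj x"
instance proof
  fix x y :: complex and r :: real
  show "cj (cj x) = x" by (simp add: cj_complex_def)
  show "cj (x + y) = cj x + cj y" by (simp add: cj_complex_def)
  show "cj (x * y) = cj x * cj y" by (simp add: cj_complex_def)
  show "cj (r *\<^sub>R 1) = r *\<^sub>R (1::complex)" by (simp add: cj_complex_def)
  show "inner x y = inner 1 (cj x * y)" by (simp add: cj_complex_def inner_complex_def)
  show "cj x * x = (cmod x)\<^sup>2 *\<^sub>R 1" by (simp add: cj_complex_def scaleR_conv_of_real mult.commute[of "cnj x"] complex_mult_cnj cmod_power2 del: of_real_power)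
qed
end

lemma cj_of_real[simp]: "cj (of_real r :: 'a::rcl) = of_real r"
  using cj_scaleR_one[of r] by (simp add: scaleR_conv_of_real)

lemma cj_mult_self': "cj x * x = (of_real ((norm x)\<^sup>2) :: 'a::rcl)"
  using cj_mult_self[of x] by (simp add: scaleR_conv_of_real)

definition hadj :: "'a::rcl^'c^'r \<Rightarrow> 'a^'r^'c" where "hadj M = (\<chi> i j. cj (M $ j $ i))"
definition ip :: "'a::rcl^'n \<Rightarrow> 'a^'n \<Rightarrow> 'a" where "ip u v = (\<Sum>i\<in>UNIV. cj (u$i) * v$i)"
definition re :: "'a::rcl \<Rightarrow> real" where "re x = inner 1 x"

lemma cj_zero[simp]: "cj 0 = (0::'a::rcl)"
  using cj_add[of "0::'a" 0] by simp
lemma cj_one[simp]: "cj 1 = (1::'a::rcl)"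
  using cj_of_real[of 1, where 'a='a] by simp
lemma cj_neg: "cj (- x) = - cj (x::'a::rcl)"
  using cj_add[of x "-x"] minus_unique[of "cj x" "cj (-x)"] by simp
lemma cj_diff: "cj (x - y) = cj x - cj (y::'a::rcl)"
  using cj_add[of x "-y"] by (simp add: cj_neg)
lemma cj_sum: "cj (sum f A) = sum (\<lambda>x. cj (f x)) (A::'b set) " for f :: "'b \<Rightarrow> 'a::rcl"
  by (induction A rule: infinite_finite_induct) (auto simp: cj_add)
lemma cj_eq_iff[simp]: "cj x = cj y \<longleftrightarrow> x = (y::'a::rcl)"
  by (metis cj_cj)
lemma cj_eq_0_iff[simp]: "cj x = 0 \<longleftrightarrow> x = (0::'a::rcl)"
  by (metis cj_cj cj_zero)

lemma re_add: "re (x + y) = re x + re y" by (simp add: re_def inner_add_right)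
lemma re_diff: "re (x - y) = re x - re y" by (simp add: re_def inner_diff_right)
lemma re_sum: "re (sum f A) = (\<Sum>x\<in>A. re (f x))" by (simp add: re_def inner_sum_right)
lemma re_of_real_mult: "re (of_real r * x) = r * re (x::'a::rcl)"
  by (simp add: re_def scaleR_conv_of_real[symmetric])
lemma inner_one_one[simp]: "inner (1::'a::rcl) 1 = 1"
  by (metis norm_one power2_norm_eq_inner one_power2)
lemma re_of_real[simp]: "re (of_real r :: 'a::rcl) = r"
  using re_of_real_mult[of r "1::'a"] by (simp add: re_def)
lemma re_cj[simp]: "re (cj x) = re (x::'a::rcl)"
  using inner_cj[of x 1] by (simp add: re_def inner_commute)
lemma re_cj_mult: "re (cj x * y) = inner x (y::'a::rcl)"
  by (simp add: re_def inner_cj[symmetric])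

lemma ip_add_right: "ip u (v + w) = ip u v + ip u w"
  by (simp add: ip_def distrib_left sum.distrib)
lemma ip_diff_right: "ip u (v - w) = ip u v - ip u w"
  by (simp add: ip_def right_diff_distrib sum_subtractf)
lemma ip_scale_right: "ip u (c *s v) = c * ip u v"
  by (simp add: ip_def sum_distrib_left mult.left_commute)
lemma ip_scale_left: "ip (c *s u) v = cj c * ip u v"
  by (simp add: ip_def sum_distrib_left cj_mult mult.assoc)
lemma ip_zero_right[simp]: "ip u 0 = 0" by (simp add: ip_def zero_index)
lemma ip_sum_right: "ip u (sum f A) = (\<Sum>a\<in>A. ip u (f a))"
  by (induction A rule: infinite_finite_induct) (simp_all add: ip_add_right)
lemma ip_swap: "ip v u = cj (ip u v)"
  by (simp add: ip_def cj_sum cj_mult mult.commute)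
lemma ip_self: "ip w w = (of_real ((norm w)\<^sup>2) :: 'a::rcl)"
proof -
  have "ip w w = (\<Sum>i\<in>UNIV. of_real ((norm (w$i))\<^sup>2) :: 'a)"
    by (simp add: ip_def cj_mult_self')
  also have "\<dots> = of_real (\<Sum>i\<in>UNIV. (norm (w$i))\<^sup>2)" by simp
  also have "(\<Sum>i\<in>UNIV. (norm (w$i))\<^sup>2) = (norm w)\<^sup>2"
    by (simp add: norm_vec_def L2_set_def sum_nonneg)
  finally show ?thesis .
qed
lemma re_ip: "re (ip u v) = (\<Sum>i\<in>UNIV. inner (u$i) (v$i))"
  by (simp add: ip_def re_sum re_cj_mult)
lemma ip_matrix: "ip u (H *v v) = ip (hadj H *v u) v"
proof -
  have "ip u (H *v v) = (\<Sum>i\<in>UNIV. \<Sum>j\<in>UNIV. cj(u$i) * (H$i$j * v$j))"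
    by (simp add: ip_def matrix_vector_mult_def sum_distrib_left)
  also have "\<dots> = (\<Sum>j\<in>UNIV. \<Sum>i\<in>UNIV. cj(u$i) * (H$i$j * v$j))" by (rule sum.swap)
  also have "\<dots> = ip (hadj H *v u) v"
    by (simp add: ip_def hadj_def matrix_vector_mult_def cj_sum cj_mult sum_distrib_left sum_distrib_right mult_ac)
  finally show ?thesis .
qed

lemma scaleR_vec_sv: "r *\<^sub>R w = (of_real r :: 'a::rcl) *s w"
proof (rule vec_eq_iff[THEN iffD2], intro allI)
  fix i show "(r *\<^sub>R w)$i = (of_real r *s w)$i"
    unfolding vector_scaleR_component vector_smult_component by (rule scaleR_conv_of_real)
qed

lemma ip_add_left: "ip (u + v) w = ip u w + ip v w"
  by (simp add: ip_def cj_add distrib_right sum.distrib)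

lemma mv_scale: "H *v (c *s w) = c *s (H *v w)" for H :: "'a::comm_ring_1^'n^'m"
  by (simp add: vec_eq_iff matrix_vector_mult_def sum_distrib_left mult_ac)

lemma exists_orth:
  fixes f :: "'n::finite \<Rightarrow> 'a::rcl^'n"
  assumes card: "card I < CARD('n)"
    and on: "\<forall>a\<in>I. \<forall>b\<in>I. ip (f a) (f b) = (if a = b then 1 else 0)"
  shows "\<exists>w. w \<noteq> 0 \<and> (\<forall>a\<in>I. ip (f a) w = 0)"
proof -
  have "vec.span (f ` I) \<noteq> UNIV"
  proof
    assume "vec.span (f ` I) = UNIV"
    then have "vec.dim (UNIV::('a^'n) set) \<le> card (f ` I)"
      by (intro vec.dim_le_card) auto
    moreover have "card (f ` I) \<le> card I" by (rule card_image_le) simp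
    ultimately show False using card vec_dim_card[where 'a='a and 'n='n] by linarith
  qed
  then obtain w where w: "w \<notin> vec.span (f ` I)" by blast
  define s where "s = (\<Sum>a\<in>I. ip (f a) w *s f a)"
  have s: "s \<in> vec.span (f ` I)" unfolding s_def
    by (intro vec.span_sum vec.span_scale vec.span_base) auto
  have "w - s \<noteq> 0" using w s by auto
  moreover have "ip (f b) (w - s) = 0" if b: "b \<in> I" for b
  proof -
    have "ip (f b) s = (\<Sum>a\<in>I. ip (f a) w * ip (f b) (f a))"
      by (simp add: s_def ip_sum_right ip_scale_right)
    also have "\<dots> = (\<Sum>a\<in>I. if b = a then ip (f a) w else 0)"
      using on b by (intro sum.cong) auto
    also have "\<dots> = ip (f b) w" using b by simp
    finally show ?thesis by (simp add: ip_diff_right)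
  qed
  ultimately show ?thesis by blast
qed

lemma quad_zero:
  fixes a b :: real
  assumes "\<forall>t. a * t + b * t\<^sup>2 \<le> 0"
  shows "a = 0"
proof (rule ccontr)
  assume a: "a \<noteq> 0"
  define t where "t = \<bar>a\<bar> / (\<bar>b\<bar> + 1)"
  have tpos: "t > 0" using a by (simp add: t_def add_pos_nonneg)
  have 1: "a * t + b * t\<^sup>2 \<le> 0" and 2: "a * (-t) + b * (-t)\<^sup>2 \<le> 0" using assms by blast+
  have "\<bar>a\<bar> * t \<le> - b * t\<^sup>2" using 1 2 by (cases "a \<ge> 0") auto
  also have "\<dots> \<le> \<bar>b\<bar> * t\<^sup>2" by (metis abs_ge_minus_self mult_minus_left mult_right_mono zero_le_power2)
  finally have "\<bar>a\<bar> * t \<le> (\<bar>b\<bar> * t) * t" by (simp add: power2_eq_square mult.assoc)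
  then have 3: "\<bar>a\<bar> \<le> \<bar>b\<bar> * t" using tpos by simp
  have "(\<bar>b\<bar> + 1) * t = \<bar>a\<bar>" unfolding t_def by simp
  then have "\<bar>b\<bar> * t + t = \<bar>a\<bar>" by (simp add: algebra_simps)
  with 3 tpos show False by linarith
qed

lemma ip_scale_left_right: "ip (c *s u) (d *s v) = cj c * d * ip u v"
  by (simp add: ip_scale_left ip_scale_right mult_ac)

lemma cont_ip: "continuous_on S (\<lambda>w. ip u w)"
  unfolding ip_def by (intro continuous_intros)

lemma re_ip_mv: "re (ip w (H *v w)) = (\<Sum>i\<in>UNIV. inner (w$i) (\<Sum>j\<in>UNIV. H$i$j * w$j))"
  by (simp add: re_ip matrix_vector_mult_def)

lemma norm2_re: "(norm w)\<^sup>2 = re (ip w (w::'a::rcl^'n))"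
  by (simp only: ip_self re_of_real)

lemma new_eigvec:
  fixes H :: "'a::rcl^'n^'n" and f :: "'n \<Rightarrow> 'a^'n"
  assumes herm: "hadj H = H" and card: "card I < CARD('n)"
   and on: "\<forall>a\<in>I. \<forall>b\<in>I. ip (f a) (f b) = (if a = b then 1 else 0)"
   and ev: "\<forall>a\<in>I. H *v f a = \<mu> a *s f a"
  shows "\<exists>x l. ip x x = 1 \<and> (\<forall>a\<in>I. ip (f a) x = 0) \<and> H *v x = of_real l *s x"
proof -
  define W where "W = {w. \<forall>a\<in>I. ip (f a) w = 0}"
  define q where "q w = re (ip w (H *v w))" for w
  have hsym: "ip u (H *v v) = ip (H *v u) v" for u v using ip_matrix[of u H v] herm by simp
  have W_lin: "u + c *s v \<in> W" if "u \<in> W" "v \<in> W" for u v c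
    using that by (simp add: W_def ip_add_right ip_scale_right)
  have W_scale: "c *s v \<in> W" if "v \<in> W" for v c
    using that by (simp add: W_def ip_scale_right)
  obtain w0 where w0: "w0 \<noteq> 0" "w0 \<in> W" using exists_orth[OF card on] W_def by auto
  define S where "S = W \<inter> sphere 0 1"
  have "closed W"
  proof -
    have "W = (\<Inter>a\<in>I. {w. ip (f a) w = 0})" by (auto simp: W_def)
    moreover have "closed {w. ip (f a) w = 0}" for a
      by (rule closed_Collect_eq) (auto intro: cont_ip)
    ultimately show ?thesis by auto
  qed
  then have "compact S" unfolding S_def by (rule closed_Int_compact[OF _ compact_sphere])
  moreover have "S \<noteq> {}"
  proof -
    have "(inverse (norm w0)) *\<^sub>R w0 \<in> W" using w0 unfolding scaleR_vec_sv by (intro W_scale)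
    moreover have "norm ((inverse (norm w0)) *\<^sub>R w0) = 1" using w0 by simp
    ultimately have "(inverse (norm w0)) *\<^sub>R w0 \<in> S" by (simp add: S_def)
    then show ?thesis by blast
  qed
  moreover have "continuous_on S q"
    unfolding q_def re_ip_mv by (intro continuous_intros)
  ultimately obtain x where xS: "x \<in> S" and xmax: "\<forall>y\<in>S. q y \<le> q x"
    using continuous_attains_sup by blast
  define l where "l = q x"
  have xW: "x \<in> W" and nx: "norm x = 1" using xS by (auto simp: S_def)
  have q_scale: "q (of_real r *s w) = r\<^sup>2 * q w" for r w
  proof -
    have "q (of_real r *s w) = re (of_real (r*r) * ip w (H *v w))"
      by (simp add: q_def mv_scale ip_scale_left_right)
    then show ?thesis by (simp only: re_of_real_mult q_def power2_eq_square)
  qed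
  have bound: "q w \<le> l * (norm w)\<^sup>2" if wW: "w \<in> W" for w
  proof (cases "w = 0")
    case True then show ?thesis by (simp add: q_def re_def)
  next
    case False
    define c where "c = (of_real (inverse (norm w)) :: 'a)"
    have "c *s w \<in> W" using wW by (rule W_scale)
    moreover have "norm (c *s w) = 1" using False unfolding c_def scaleR_vec_sv[symmetric] by simp
    ultimately have "c *s w \<in> S" by (simp add: S_def)
    then have "q (c *s w) \<le> l" using xmax l_def by blast
    moreover have "q (c *s w) = (inverse (norm w))\<^sup>2 * q w"
      unfolding c_def by (rule q_scale)
    ultimately have "(inverse (norm w))\<^sup>2 * q w \<le> l" by simp
    then show ?thesis using False
      by (simp add: power2_eq_square field_simps)
  qed
  define v where "v = H *v x - of_real l *s x"
  have key: "re (ip z v) = 0" if zW: "z \<in> W" for z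
  proof -
    define a where "a = 2 * re (ip z v)"
    define b where "b = q z - l * (norm z)\<^sup>2"
    have "a * t + b * t\<^sup>2 \<le> 0" for t
    proof -
      let ?y = "x + of_real t *s z"
      have ineq: "q ?y \<le> l * (norm ?y)\<^sup>2" using bound W_lin[OF xW zW] by blast
      have Q: "q ?y = l + 2 * t * re (ip z (H *v x)) + t\<^sup>2 * q z"
      proof -
        have e1: "H *v ?y = H *v x + of_real t *s (H *v z)"
          by (simp only: matrix_vector_right_distrib mv_scale)
        have A: "ip ?y (H *v ?y) = ip x (H *v x) + of_real t * ip x (H *v z) + of_real t * ip z (H *v x)
              + of_real (t * t) * ip z (H *v z)"
          unfolding e1 ip_add_left ip_add_right ip_scale_left ip_scale_right cj_of_real
          by (simp add: algebra_simps)
        have B: "re (ip x (H *v z)) = re (ip z (H *v x))"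
          by (simp only: hsym ip_swap[of "H *v x" z] re_cj)
        have "q ?y = q x + t * re (ip z (H *v x)) + t * re (ip z (H *v x)) + (t * t) * q z"
          unfolding q_def A re_add re_of_real_mult B ..
        then show ?thesis by (simp add: l_def power2_eq_square)
      qed
      have N: "(norm ?y)\<^sup>2 = 1 + 2 * t * re (ip z x) + t\<^sup>2 * (norm z)\<^sup>2"
      proof -
        have A: "ip ?y ?y = ip x x + of_real t * ip x z + of_real t * ip z x + of_real (t * t) * ip z z"
          unfolding ip_add_left ip_add_right ip_scale_left ip_scale_right cj_of_real
          by (simp add: algebra_simps)
        have B: "re (ip x z) = re (ip z x)" by (simp only: ip_swap[of z x] re_cj)
        have "re (ip ?y ?y) = re (ip x x) + t * re (ip z x) + t * re (ip z x) + (t * t) * re (ip z z)"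
          unfolding A re_add re_of_real_mult B ..
        then show ?thesis using nx by (simp add: norm2_re[symmetric] power2_eq_square)
      qed
      have R: "re (ip z (H *v x)) = re (ip z v) + l * re (ip z x)"
        by (simp add: v_def ip_diff_right ip_scale_right re_diff re_of_real_mult)
      have "a * t + b * t\<^sup>2 = q ?y - l * (norm ?y)\<^sup>2"
        unfolding Q N R a_def b_def by (simp add: algebra_simps)
      then show ?thesis using ineq by linarith
    qed
    then have "a = 0" by (intro quad_zero) auto
    then show ?thesis by (simp add: a_def)
  qed
  have vW: "v \<in> W"
  proof -
    have "ip (f a) v = 0" if a: "a \<in> I" for a
    proof -
      have "ip (f a) (H *v x) = ip (H *v f a) x" by (rule hsym)
      also have "\<dots> = cj (\<mu> a) * ip (f a) x" using ev a by (simp add: ip_scale_left)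
      also have "\<dots> = 0" using xW a by (simp add: W_def)
      finally show ?thesis using xW a by (simp add: v_def ip_diff_right ip_scale_right W_def)
    qed
    then show ?thesis by (simp add: W_def)
  qed
  have "v = 0" using key[OF vW] by (simp only: ip_self re_of_real) simp
  then have "H *v x = of_real l *s x" by (simp add: v_def)
  moreover have "ip x x = 1" using nx by (simp add: ip_self)
  ultimately show ?thesis using xW W_def by blast
qed

lemma eig_family:
  fixes H :: "'a::rcl^'n^'n" and I :: "'n set"
  assumes herm: "hadj H = H"
  shows "\<exists>f \<mu>. (\<forall>a\<in>I. \<forall>b\<in>I. ip (f a) (f b) = (if a = b then 1 else 0))
               \<and> (\<forall>a\<in>I. H *v f a = \<mu> a *s f a)"
proof -
  have "finite I" by simp
  then show ?thesis
  proof (induction I rule: finite_induct)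
    case empty then show ?case by simp
  next
    case (insert i F)
    then obtain f \<mu> where on: "\<forall>a\<in>F. \<forall>b\<in>F. ip (f a) (f b) = (if a = b then 1 else 0)"
       and ev: "\<forall>a\<in>F. H *v f a = \<mu> a *s f a" by blast
    have "card (insert i F) \<le> CARD('n)" by (rule card_mono) auto
    then have card: "card F < CARD('n)" using insert by simp
    obtain x l where x: "ip x x = 1" "\<forall>a\<in>F. ip (f a) x = 0" "H *v x = of_real l *s x"
      using new_eigvec[OF herm card on ev] by blast
    have x2: "\<forall>a\<in>F. ip x (f a) = 0" using x(2) by (simp add: ip_swap[of x])
    define f' where "f' = f(i := x)"
    define \<mu>' where "\<mu>' = \<mu>(i := of_real l)"
    have "\<forall>a\<in>insert i F. \<forall>b\<in>insert i F. ip (f' a) (f' b) = (if a = b then 1 else 0)"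
      using on x x2 insert.hyps by (auto simp: f'_def)
    moreover have "\<forall>a\<in>insert i F. H *v f' a = \<mu>' a *s f' a"
      using ev x insert.hyps by (auto simp: f'_def \<mu>'_def)
    ultimately show ?case by blast
  qed
qed


theorem spectral:
  fixes H :: "'a::rcl^'n^'n"
  assumes herm: "hadj H = H"
  shows "\<exists>(P::'a^'n^'n) d. hadj P ** P = mat 1 \<and> hadj P ** H ** P = (\<chi> i j. if i = j then d i else 0)"
proof -
  obtain f :: "'n \<Rightarrow> 'a^'n" and \<mu> where on0: "\<forall>a\<in>UNIV. \<forall>b\<in>UNIV. ip (f a) (f b) = (if a = b then 1 else (0::'a))"
       and ev0: "\<forall>a\<in>UNIV. H *v f a = \<mu> a *s f a"
    using eig_family[OF herm, of "UNIV::'n set"] by blast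
  have on: "\<forall>a b. ip (f a) (f b) = (if a = b then 1 else 0)" using on0 by blast
  have ev: "\<forall>a. H *v f a = \<mu> a *s f a" using ev0 by blast
  define P where "P = (\<chi> r c. f c $ r)"
  have 1: "hadj P ** P = mat 1"
  proof -
    have "(hadj P ** P) $ a $ b = ip (f a) (f b)" for a b
      by (simp add: matrix_matrix_mult_def hadj_def P_def ip_def)
    then show ?thesis using on by (simp add: vec_eq_iff mat_def)
  qed
  have HP: "H ** P = (\<chi> r c. \<mu> c * f c $ r)"
  proof -
    have "(H ** P) $ r $ c = (H *v f c) $ r" for r c
      by (simp add: matrix_matrix_mult_def matrix_vector_mult_def P_def)
    then show ?thesis using ev by (simp add: vec_eq_iff)
  qed
  have "(hadj P ** (H ** P)) $ a $ b = \<mu> b * ip (f a) (f b)" for a b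
    unfolding HP by (simp add: matrix_matrix_mult_def hadj_def P_def ip_def sum_distrib_left mult_ac)
  then have "hadj P ** H ** P = (\<chi> i j. if i = j then \<mu> i else 0)"
    using on by (simp add: vec_eq_iff matrix_mul_assoc[symmetric])
  with 1 show ?thesis by blast
qed

lemma adj_hadj: "adj M = hadj M"
  by (simp add: adj_def hadj_def cj_complex_def)

lemma hadj_real: "hadj (M::real^'c^'r) = transpose M"
  by (simp add: hadj_def transpose_def cj_real_def)

lemma cpx_mult: "cpx (A ** B) = cpx A ** cpx B"
  by (simp add: cpx_def matrix_matrix_mult_def vec_eq_iff)

lemma cpx_transpose: "cpx (transpose M) = adj (cpx M)"
  by (simp add: cpx_def adj_def transpose_def vec_eq_iff)

lemma adj_mult: "adj (A ** B) = adj B ** adj A"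
  by (simp add: adj_def matrix_matrix_mult_def vec_eq_iff mult.commute)

lemma adj_adj[simp]: "adj (adj A) = A"
  by (simp add: adj_def vec_eq_iff)

lemma adj_mat1[simp]: "adj (mat 1) = mat 1"
  by (simp add: adj_def mat_def vec_eq_iff)

lemma cpx_mat1[simp]: "cpx (mat 1) = mat 1"
  by (simp add: cpx_def mat_def vec_eq_iff)

lemma cpx_mpow: "cpx (mpow A t) = mpow (cpx A) t"
  by (induction t) (simp_all add: cpx_mult)

lemma adj_cdiag: "adj (cdiag v) = cdiag (\<chi> i. cnj (v $ i))"
  by (simp add: adj_def cdiag_def vec_eq_iff)

lemma cdiag_mult: "cdiag a ** cdiag b = cdiag (\<chi> i. a $ i * b $ i)"
proof -
  have "(cdiag a ** cdiag b) $ i $ j = cdiag (\<chi> i. a $ i * b $ i) $ i $ j" for i j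
  proof -
    have "(cdiag a ** cdiag b) $ i $ j = (\<Sum>k\<in>UNIV. if k = i then (if i = j then a$i*b$i else 0) else 0)"
      unfolding cdiag_def matrix_matrix_mult_def vec_lambda_beta by (rule sum.cong) auto
    then show ?thesis by (simp add: cdiag_def)
  qed
  then show ?thesis by (simp add: vec_eq_iff)
qed

lemma cdiag_one: "cdiag (\<chi> i. 1) = mat 1"
  by (simp add: cdiag_def mat_def vec_eq_iff)

lemma unitary_right: "unitary P \<Longrightarrow> P ** adj P = mat 1"
  unfolding unitary_def using matrix_left_right_inverse by blast

lemma mpow_conj:
  assumes "unitary P"
  shows "mpow (P ** D ** adj P) t = P ** mpow D t ** adj P"
proof (induction t)
  case 0 then show ?case using unitary_right[OF assms] by simp
next
  case (Suc t)
  have "mpow (P ** D ** adj P) (Suc t) = (P ** D ** adj P) ** (P ** mpow D t ** adj P)"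
    using Suc by simp
  also have "\<dots> = P ** D ** (adj P ** P) ** mpow D t ** adj P"
    by (simp add: matrix_mul_assoc)
  also have "\<dots> = P ** mpow D (Suc t) ** adj P" using assms unfolding unitary_def by (simp add: matrix_mul_assoc)
  finally show ?case .
qed

lemma mpow_cdiag: "mpow (cdiag v) t = cdiag (\<chi> i. (v $ i) ^ t)"
  by (induction t) (simp_all add: cdiag_one cdiag_mult)

lemma canon_P:
  assumes "canonical A C lam U"
  obtains P where "unitary P" "cpx A = P ** cdiag lam ** adj P" "cpx C = U ** adj P"
proof -
  obtain P where P: "unitary P" "adj P ** cpx A ** P = cdiag lam" "U = cpx C ** P"
    using assms unfolding canonical_def by blast
  have R: "P ** adj P = mat 1" using unitary_right[OF P(1)] .
  have "cpx A = (P ** adj P) ** cpx A ** (P ** adj P)" using R by simp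
  also have "\<dots> = P ** (adj P ** cpx A ** P) ** adj P" by (simp add: matrix_mul_assoc)
  finally have 1: "cpx A = P ** cdiag lam ** adj P" using P(2) by simp
  have "cpx C = cpx C ** (P ** adj P)" using R by simp
  then have 2: "cpx C = U ** adj P" using P(3) by (simp add: matrix_mul_assoc)
  show ?thesis using that[OF P(1) 1 2] .
qed

lemma canon_U:
  assumes "transpose C ** C = mat 1" "canonical A C lam U"
  shows "adj U ** U = mat 1"
proof -
  obtain P where P: "unitary P" "U = cpx C ** P"
    using assms(2) unfolding canonical_def by blast
  have "adj U ** U = adj P ** (adj (cpx C) ** cpx C) ** P"
    by (simp add: P adj_mult matrix_mul_assoc)
  also have "adj (cpx C) ** cpx C = mat 1"
    using assms(1) by (metis cpx_transpose cpx_mult cpx_mat1)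
  finally show ?thesis using P(1) by (simp add: unitary_def)
qed

lemma cdiag_axis: "cdiag lam *v axis k 1 = lam $ k *s axis k 1"
proof -
  have "(cdiag lam *v axis k 1) $ i = (lam $ k *s axis k 1) $ i" for i
  proof -
    have "(cdiag lam *v axis k 1) $ i = (\<Sum>j\<in>UNIV. if j = i then (if i = k then lam $ k else 0) else 0)"
      unfolding cdiag_def matrix_vector_mult_def axis_def vec_lambda_beta by (rule sum.cong) auto
    then show ?thesis by (simp add: axis_def)
  qed
  then show ?thesis by (simp add: vec_eq_iff)
qed

lemma canon_stable:
  assumes "strictly_stable A" "canonical A C lam U"
  shows "cmod (lam $ k) < 1"
proof -
  obtain P where P: "unitary P" "cpx A = P ** cdiag lam ** adj P"
    using canon_P[OF assms(2)] by metis
  define v where "v = P *v axis k 1"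
  have AP: "cpx A ** P = P ** cdiag lam"
    using P unfolding unitary_def by (simp add: matrix_mul_assoc[symmetric])
  have "cpx A *v v = (cpx A ** P) *v axis k 1" by (simp add: v_def matrix_vector_mul_assoc)
  also have "\<dots> = P *v (cdiag lam *v axis k 1)" by (simp add: AP matrix_vector_mul_assoc)
  also have "\<dots> = lam $ k *s v" by (simp add: cdiag_axis mv_scale v_def)
  finally have ev: "cpx A *v v = lam $ k *s v" .
  have "adj P *v v = axis k 1" using P(1) unfolding unitary_def
    by (simp add: v_def matrix_vector_mul_assoc)
  then have "v \<noteq> 0" by auto
  then show ?thesis using assms(1) ev unfolding strictly_stable_def by blast
qed

lemma smul_mat_mid: "(X ** (\<chi> i j. c * M $ i $ j) ** Y) = (\<chi> i j. c * (X ** M ** Y) $ i $ j)"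
  for X M Y :: "complex^'n^'n"
  by (simp add: vec_eq_iff matrix_matrix_mult_def sum_distrib_left sum_distrib_right mult_ac)

lemma canon_exists:
  fixes A :: "real^'n^'n" and C :: "real^'n^'m"
  assumes "admissible sk A C"
  shows "\<exists>lam U. canonical A C lam U"
proof (cases sk)
  case False
  then have AT: "transpose A = A" using assms by (simp add: admissible_def)
  have "hadj (cpx A) = cpx A" using AT cpx_transpose[of A] unfolding adj_hadj by simp
  from spectral[OF this] obtain P :: "complex^'n^'n" and d where P: "hadj P ** P = mat 1"
      "hadj P ** cpx A ** P = (\<chi> i j. if i = j then d i else 0)"
    by blast
  have "unitary P" using P(1) by (simp add: unitary_def adj_hadj)
  moreover have "adj P ** cpx A ** P = cdiag (\<chi> i. d i)"
  proof -
    have "(adj P ** cpx A ** P) $ i $ j = cdiag (\<chi> i. d i) $ i $ j" for i j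
      using P(2) unfolding adj_hadj cdiag_def by simp
    then show ?thesis by (simp add: vec_eq_iff)
  qed
  ultimately show ?thesis unfolding canonical_def by blast
next
  case True
  then have AT: "transpose A = - A" using assms by (simp add: admissible_def)
  define H where "H = (\<chi> i j. \<i> * cpx A $ i $ j)"
  have AT': "A $ j $ i = - A $ i $ j" for i j
    using arg_cong[OF AT, of "\<lambda>M. M $ i $ j"] by (simp add: transpose_def)
  have "hadj H $ i $ j = H $ i $ j" for i j
  proof -
    have "hadj H $ i $ j = cnj (\<i> * complex_of_real (A $ j $ i))"
      by (simp add: H_def hadj_def cj_complex_def cpx_def)
    also have "\<dots> = \<i> * complex_of_real (A $ i $ j)" unfolding AT'[of j i] by simp
    finally show ?thesis by (simp add: H_def cpx_def)
  qed
  then have "hadj H = H" by (simp add: vec_eq_iff)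
  from spectral[OF this] obtain P :: "complex^'n^'n" and d where P: "hadj P ** P = mat 1"
      "hadj P ** H ** P = (\<chi> i j. if i = j then d i else 0)"
    by blast
  have "unitary P" using P(1) by (simp add: unitary_def adj_hadj)
  moreover have "adj P ** cpx A ** P = cdiag (\<chi> i. - \<i> * d i)"
  proof -
    have "(\<chi> i j. \<i> * (adj P ** cpx A ** P) $ i $ j) = (\<chi> i j. if i = j then d i else 0)"
      using P(2) by (simp add: H_def smul_mat_mid adj_hadj)
    then have E: "\<i> * (adj P ** cpx A ** P) $ i $ j = (if i = j then d i else 0)" for i j
      by (metis (mono_tags, lifting) vec_lambda_beta)
    have "(adj P ** cpx A ** P) $ i $ j = (if i = j then - \<i> * d i else 0)" for i j
    proof -
      have "(adj P ** cpx A ** P) $ i $ j = - \<i> * (\<i> * (adj P ** cpx A ** P) $ i $ j)"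
        by (simp add: mult.assoc[symmetric])
      then show ?thesis using E[of i j] by simp
    qed
    then show ?thesis by (simp add: vec_eq_iff cdiag_def)
  qed
  ultimately show ?thesis unfolding canonical_def by blast
qed

lemma vec_sums:
  assumes "\<And>i. (\<lambda>n. f n $ i) sums (s $ i)"
  shows "f sums s"
  using assms unfolding sums_def by (intro vec_tendstoI) (simp add: sum_component)

lemma mat_sums:
  assumes "\<And>i j. (\<lambda>n. f n $ i $ j) sums (s $ i $ j)"
  shows "f sums s"
  by (rule vec_sums, rule vec_sums) (use assms in simp)

lemma entry3: "(X ** M ** Y) $ i $ j = (\<Sum>k\<in>UNIV. \<Sum>l\<in>UNIV. X$i$k * (M$k$l * Y$l$j))"
  for X :: "'a::comm_semiring_1^'k^'i"
proof -
  have "(X ** M ** Y) $ i $ j = (\<Sum>l\<in>UNIV. \<Sum>k\<in>UNIV. X$i$k * (M$k$l * Y$l$j))"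
    by (simp add: matrix_matrix_mult_def sum_distrib_right mult.assoc)
  also have "\<dots> = (\<Sum>k\<in>UNIV. \<Sum>l\<in>UNIV. X$i$k * (M$k$l * Y$l$j))" by (rule sum.swap)
  finally show ?thesis .
qed

lemma sums_sandwich:
  fixes f :: "nat \<Rightarrow> 'a::{real_normed_field}^'l^'k"
  assumes "f sums S"
  shows "(\<lambda>t. X ** f t ** Y) sums (X ** S ** Y)"
proof (rule mat_sums)
  fix i j
  have "(\<lambda>t. f t $ k $ l) sums (S $ k $ l)" for k l
    using sums_vec_nth[OF sums_vec_nth[OF assms]] by simp
  then show "(\<lambda>n. (X ** f n ** Y) $ i $ j) sums ((X ** S ** Y) $ i $ j)"
    unfolding entry3 by (intro sums_sum sums_mult sums_mult2)
qed

lemma delta_sum_r: "(\<Sum>q\<in>UNIV. x * (y q * (if q = l then z q else 0))) = x * (y l * (z l::'a::comm_semiring_1))"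
  for l :: "'n::finite"
proof -
  have "(\<Sum>q\<in>UNIV. x * (y q * (if q = l then z q else 0))) = (\<Sum>q\<in>UNIV. if q = l then x * (y l * z l) else 0)"
    by (rule sum.cong) auto
  then show ?thesis by simp
qed

lemma delta_sum_l: "(\<Sum>p\<in>UNIV. (if k = p then x else 0) * f p) = x * (f k::'a::comm_semiring_1)"
  for k :: "'n::finite"
proof -
  have "(\<Sum>p\<in>UNIV. (if k = p then x else 0) * f p) = (\<Sum>p\<in>UNIV. if p = k then x * f k else 0)"
    by (rule sum.cong) auto
  then show ?thesis by simp
qed

lemma diag_sandwich: "cdiag a ** B ** cdiag b = (\<chi> k l. a $ k * B $ k $ l * b $ l)"
proof -
  have "(cdiag a ** B ** cdiag b) $ k $ l = a $ k * B $ k $ l * b $ l" for k l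
  proof -
    have "(cdiag a ** B ** cdiag b) $ k $ l
          = (\<Sum>p\<in>UNIV. (if k = p then a $ k else 0) * (\<Sum>q\<in>UNIV. 1 * (B$p$q * (if q = l then b $ q else 0))))"
      unfolding entry3 cdiag_def vec_lambda_beta by (simp add: sum_distrib_left)
    also have "\<dots> = a $ k * B $ k $ l * b $ l" unfolding delta_sum_r delta_sum_l by (simp add: mult.assoc)
    finally show ?thesis .
  qed
  then show ?thesis by (simp add: vec_eq_iff)
qed

lemma obs_mpow_cpx:
  assumes u: "unitary P" and a: "cpx A = P ** cdiag l ** adj P" and c: "cpx C = U ** adj P"
  shows "cpx (obs A C t) = U ** cdiag (\<chi> i. l$i ^ t) ** adj P"
proof -
  have "cpx (obs A C t) = cpx C ** mpow (cpx A) t" by (simp add: obs_def cpx_mult cpx_mpow)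
  also have "mpow (cpx A) t = P ** cdiag (\<chi> i. l$i ^ t) ** adj P"
    unfolding a mpow_conj[OF u] mpow_cdiag ..
  also have "cpx C ** (P ** cdiag (\<chi> i. l$i ^ t) ** adj P) = U ** (adj P ** P) ** cdiag (\<chi> i. l$i ^ t) ** adj P"
    unfolding c by (simp add: matrix_mul_assoc)
  also have "\<dots> = U ** cdiag (\<chi> i. l$i ^ t) ** adj P" using u by (simp add: unitary_def)
  finally show ?thesis .
qed

lemma term_cpx:
  assumes u1: "unitary P1" and a1: "cpx A1 = P1 ** cdiag l1 ** adj P1" and c1: "cpx C1 = U1 ** adj P1"
    and u2: "unitary P2" and a2: "cpx A2 = P2 ** cdiag l2 ** adj P2" and c2: "cpx C2 = U2 ** adj P2"
  shows "cpx (transpose (obs A1 C1 t) ** obs A2 C2 t)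
       = P1 ** (\<chi> k l. (cnj (l1$k) * l2$l)^t * (adj U1 ** U2)$k$l) ** adj P2"
proof -
  have "cpx (transpose (obs A1 C1 t) ** obs A2 C2 t) = adj (cpx (obs A1 C1 t)) ** cpx (obs A2 C2 t)"
    by (simp add: cpx_mult cpx_transpose)
  also have "\<dots> = adj (U1 ** cdiag (\<chi> i. l1$i ^ t) ** adj P1) ** (U2 ** cdiag (\<chi> i. l2$i ^ t) ** adj P2)"
    unfolding obs_mpow_cpx[OF u1 a1 c1] obs_mpow_cpx[OF u2 a2 c2] ..
  also have "\<dots> = P1 ** (adj (cdiag (\<chi> i. l1$i ^ t)) ** (adj U1 ** U2) ** cdiag (\<chi> i. l2$i ^ t)) ** adj P2"
    by (simp add: adj_mult matrix_mul_assoc)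
  also have "adj (cdiag (\<chi> i. l1$i ^ t)) ** (adj U1 ** U2) ** cdiag (\<chi> i. l2$i ^ t)
     = (\<chi> k l. (cnj (l1$k) * l2$l)^t * (adj U1 ** U2)$k$l)"
    unfolding adj_cdiag diag_sandwich by (simp add: vec_eq_iff power_mult_distrib mult_ac)
  finally show ?thesis .
qed

lemma gram_sums:
  assumes u1: "unitary P1" and a1: "cpx A1 = P1 ** cdiag l1 ** adj P1" and c1: "cpx C1 = U1 ** adj P1"
    and u2: "unitary P2" and a2: "cpx A2 = P2 ** cdiag l2 ** adj P2" and c2: "cpx C2 = U2 ** adj P2"
    and s1: "\<And>k. cmod (l1$k) < 1" and s2: "\<And>k. cmod (l2$k) < 1"
  defines "K \<equiv> (\<chi> k l. (adj U1 ** U2)$k$l / (1 - cnj (l1$k) * l2$l))"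
  shows "(\<lambda>t. transpose (obs A1 C1 t) ** obs A2 C2 t) sums (\<chi> i j. Re ((P1 ** K ** adj P2)$i$j))"
    and "cpx (\<chi> i j. Re ((P1 ** K ** adj P2)$i$j)) = P1 ** K ** adj P2"
proof -
  define Q where "Q t = (\<chi> k l. (cnj (l1$k) * l2$l)^t * (adj U1 ** U2)$k$l)" for t
  have Qs: "Q sums K"
  proof (rule mat_sums)
    fix k l
    have "norm (cnj (l1$k) * l2$l) < 1"
    proof -
      have "cmod (l1$k) * cmod (l2$l) < 1 * 1"
        using s1[of k] s2[of l] by (intro mult_strict_mono') auto
      then show ?thesis by (simp add: norm_mult)
    qed
    then have "(\<lambda>t. (cnj (l1$k) * l2$l)^t * (adj U1 ** U2)$k$l) sums (1 / (1 - cnj (l1$k) * l2$l) * (adj U1 ** U2)$k$l)"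
      by (intro sums_mult2 geometric_sums)
    then show "(\<lambda>t. Q t $ k $ l) sums (K $ k $ l)" by (simp add: Q_def K_def)
  qed
  have cs: "(\<lambda>t. cpx (transpose (obs A1 C1 t) ** obs A2 C2 t)) sums (P1 ** K ** adj P2)"
    unfolding term_cpx[OF u1 a1 c1 u2 a2 c2] Q_def[symmetric] by (rule sums_sandwich[OF Qs])
  define X where "X = P1 ** K ** adj P2"
  have ent: "(\<lambda>t. complex_of_real ((transpose (obs A1 C1 t) ** obs A2 C2 t) $ i $ j)) sums (X $ i $ j)" for i j
    using sums_vec_nth[OF sums_vec_nth[OF cs]] by (simp add: cpx_def X_def)
  have im: "Im (X $ i $ j) = 0" for i j
    using sums_Im[OF ent[of i j]] sums_unique[OF sums_zero] by (simp add: sums_iff)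
  show "(\<lambda>t. transpose (obs A1 C1 t) ** obs A2 C2 t) sums (\<chi> i j. Re ((P1 ** K ** adj P2)$i$j))"
    by (rule mat_sums) (use sums_Re[OF ent] in \<open>simp add: X_def\<close>)
  show "cpx (\<chi> i j. Re ((P1 ** K ** adj P2)$i$j)) = P1 ** K ** adj P2"
    using im by (simp add: cpx_def vec_eq_iff X_def complex_eq_iff)
qed

definition gdiag :: "'a::comm_semiring_1^'n \<Rightarrow> 'a^'n^'n" where
  "gdiag v = (\<chi> i j. if i = j then v $ i else 0)"

lemma cdiag_gdiag: "cdiag = gdiag" by (simp add: fun_eq_iff cdiag_def gdiag_def)

lemma gdiag_mult: "gdiag a ** gdiag b = gdiag (\<chi> i. a $ i * b $ i)"
proof -
  have "(gdiag a ** gdiag b) $ i $ j = gdiag (\<chi> i. a $ i * b $ i) $ i $ j" for i j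
  proof -
    have "(gdiag a ** gdiag b) $ i $ j = (\<Sum>k\<in>UNIV. if k = i then (if i = j then a$i*b$i else 0) else 0)"
      unfolding gdiag_def matrix_matrix_mult_def vec_lambda_beta by (rule sum.cong) auto
    then show ?thesis by (simp add: gdiag_def)
  qed
  then show ?thesis by (simp add: vec_eq_iff)
qed

lemma mid_diag_entry: "(X ** gdiag v ** Y) $ i $ j = (\<Sum>k\<in>UNIV. X$i$k * (v$k * Y$k$j))"
  for X :: "'a::comm_semiring_1^'k^'i"
proof -
  have "(X ** gdiag v ** Y) $ i $ j = (\<Sum>k\<in>UNIV. X$i$k * (\<Sum>q\<in>UNIV. (if k = q then v$k else 0) * Y$q$j))"
    unfolding entry3 gdiag_def vec_lambda_beta by (simp add: sum_distrib_left)
  also have "\<dots> = (\<Sum>k\<in>UNIV. X$i$k * (v$k * Y$k$j))" unfolding delta_sum_l ..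
  finally show ?thesis .
qed

definition dvec :: "complex^'n \<Rightarrow> complex^'n" where
  "dvec l = (\<chi> k. complex_of_real (1 / (1 - (cmod (l$k))\<^sup>2)))"

lemma cpx_inj: "cpx X = cpx Y \<Longrightarrow> X = Y"
  by (simp add: cpx_def vec_eq_iff)

lemma gram_self:
  assumes u: "unitary P" and a: "cpx A = P ** cdiag l ** adj P" and c: "cpx C = U ** adj P"
    and s: "\<And>k. cmod (l$k) < 1" and uu: "adj U ** U = mat 1"
  shows "gram A C A C = (\<chi> i j. Re ((P ** cdiag (dvec l) ** adj P)$i$j))"
    and "cpx (gram A C A C) = P ** cdiag (dvec l) ** adj P"
proof -
  have K: "(\<chi> k l'. (adj U ** U)$k$l' / (1 - cnj (l$k) * l$l')) = cdiag (dvec l)"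
  proof -
    have "cnj z * z = complex_of_real ((cmod z)\<^sup>2)" for z
      using cj_mult_self'[of z] by (simp add: cj_complex_def)
    then show ?thesis by (simp add: uu vec_eq_iff cdiag_def dvec_def mat_def)
  qed
  note gs = gram_sums[OF u a c u a c s s, unfolded K]
  show g: "gram A C A C = (\<chi> i j. Re ((P ** cdiag (dvec l) ** adj P)$i$j))"
    unfolding gram_def using gs(1) by (simp add: sums_iff)
  show "cpx (gram A C A C) = P ** cdiag (dvec l) ** adj P" unfolding g by (rule gs(2))
qed

lemma dvec_ge1:
  assumes "cmod z < 1"
  shows "1 / (1 - (cmod z)\<^sup>2) \<ge> 1"
proof -
  have "(cmod z)\<^sup>2 < 1" using assms by (simp add: power_less_one_iff abs_square_less_1)
  moreover have "(cmod z)\<^sup>2 \<ge> 0" by simp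
  ultimately show ?thesis by (simp add: field_simps)
qed

lemma gram_posdef:
  assumes oQ: "transpose Q ** Q = mat 1" and cg: "cpx G = P ** cdiag (dvec l) ** adj P"
    and u: "unitary P" and s: "\<And>k. cmod (l$k) < 1"
  shows "(transpose Q ** G ** Q)$i$i \<ge> 1"
proof -
  define W where "W = adj P ** cpx Q"
  have "cpx (transpose Q ** G ** Q) = adj (cpx Q) ** (P ** cdiag (dvec l) ** adj P) ** cpx Q"
    by (simp add: cpx_mult cpx_transpose cg)
  also have "\<dots> = adj W ** cdiag (dvec l) ** W"
    by (simp add: W_def adj_mult matrix_mul_assoc)
  finally have e1: "cpx (transpose Q ** G ** Q) = adj W ** cdiag (dvec l) ** W" .
  have "adj W ** W = adj (cpx Q) ** (P ** adj P) ** cpx Q"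
    by (simp add: W_def adj_mult matrix_mul_assoc)
  also have "\<dots> = mat 1" using unitary_right[OF u]
    by (simp add: cpx_transpose[symmetric] cpx_mult[symmetric] oQ)
  finally have WW: "adj W ** W = mat 1" .
  have cm: "cnj x * x = complex_of_real ((cmod x)\<^sup>2)" for x
    using cj_mult_self'[of x] by (simp add: cj_complex_def)
  have "complex_of_real ((transpose Q ** G ** Q)$i$i) = (adj W ** cdiag (dvec l) ** W) $ i $ i"
    using arg_cong[OF e1, of "\<lambda>M. M $ i $ i"] by (simp add: cpx_def)
  also have "\<dots> = (\<Sum>k\<in>UNIV. cnj (W$k$i) * (dvec l $ k * W$k$i))"
    unfolding cdiag_gdiag mid_diag_entry by (simp add: adj_def)
  also have "\<dots> = complex_of_real (\<Sum>k\<in>UNIV. 1 / (1 - (cmod (l$k))\<^sup>2) * (cmod (W$k$i))\<^sup>2)"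
  proof -
    have "cnj (W$k$i) * (dvec l $ k * W$k$i) = complex_of_real (1 / (1 - (cmod (l$k))\<^sup>2) * (cmod (W$k$i))\<^sup>2)" for k
    proof -
      have "cnj (W$k$i) * (dvec l $ k * W$k$i) = dvec l $ k * (cnj (W$k$i) * W$k$i)" by (simp only: mult_ac)
      then show ?thesis by (simp only: cm dvec_def vec_lambda_beta of_real_mult)
    qed
    then show ?thesis by simp
  qed
  finally have r1: "(transpose Q ** G ** Q)$i$i = (\<Sum>k\<in>UNIV. 1 / (1 - (cmod (l$k))\<^sup>2) * (cmod (W$k$i))\<^sup>2)"
    by (simp only: of_real_eq_iff)
  have "complex_of_real 1 = (adj W ** W) $ i $ i" using WW by (simp add: mat_def)
  also have "\<dots> = (\<Sum>k\<in>UNIV. cnj (W$k$i) * W$k$i)" by (simp add: adj_def matrix_matrix_mult_def)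
  also have "\<dots> = complex_of_real (\<Sum>k\<in>UNIV. (cmod (W$k$i))\<^sup>2)" by (simp add: cm)
  finally have r2: "(\<Sum>k\<in>UNIV. (cmod (W$k$i))\<^sup>2) = 1" by (simp only: of_real_eq_iff)
  have "(\<Sum>k\<in>UNIV. (cmod (W$k$i))\<^sup>2) \<le> (\<Sum>k\<in>UNIV. 1 / (1 - (cmod (l$k))\<^sup>2) * (cmod (W$k$i))\<^sup>2)"
  proof (rule sum_mono)
    fix k
    show "(cmod (W$k$i))\<^sup>2 \<le> 1 / (1 - (cmod (l$k))\<^sup>2) * (cmod (W$k$i))\<^sup>2"
      using mult_right_mono[OF dvec_ge1[OF s[of k]] zero_le_power2[of "cmod (W$k$i)"]] by simp
  qed
  then show ?thesis using r1 r2 by simp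
qed

lemma gdiag_one: "gdiag (\<chi> i. 1) = mat 1"
  by (simp add: gdiag_def mat_def vec_eq_iff)

lemma transpose_gdiag: "transpose (gdiag v) = gdiag v"
  by (simp add: gdiag_def transpose_def vec_eq_iff)

lemma invertible_inv:
  assumes "invertible (L::'a::semiring_1^'n^'n)"
  shows "L ** matrix_inv L = mat 1" "matrix_inv L ** L = mat 1"
proof -
  from assms obtain L' where "L ** L' = mat 1 \<and> L' ** L = mat 1" by (auto simp: invertible_def)
  then have "L ** matrix_inv L = mat 1 \<and> matrix_inv L ** L = mat 1"
    unfolding matrix_inv_def by (rule someI)
  then show "L ** matrix_inv L = mat 1" "matrix_inv L ** L = mat 1" by auto
qed

lemma Lfac_props:
  fixes A :: "real^'n^'n" and C :: "real^'n^'m"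
  assumes cg: "cpx (gram A C A C) = P ** cdiag (dvec l) ** adj P"
    and u: "unitary P" and s: "\<And>k. cmod (l$k) < 1"
  shows "Lfac A C ** transpose (Lfac A C) = gram A C A C" "invertible (Lfac A C)"
proof -
  define G where "G = gram A C A C"
  have cg': "cpx G = P ** cdiag (dvec l) ** adj P" using cg by (simp add: G_def)
  have "cpx (transpose G) = cpx G"
  proof -
    have ad: "adj (cdiag (dvec l)) = cdiag (dvec l)"
      by (simp add: adj_cdiag dvec_def vec_eq_iff)
    show ?thesis by (simp add: cpx_transpose cg' adj_mult ad matrix_mul_assoc)
  qed
  then have "transpose G = G" by (rule cpx_inj)
  then have "hadj G = G" by (simp add: hadj_real)
  from spectral[OF this] obtain Uo :: "real^'n^'n" and d where
    U1: "hadj Uo ** Uo = mat 1" and U2: "hadj Uo ** G ** Uo = (\<chi> i j. if i = j then d i else 0)"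
    by blast
  have oU: "transpose Uo ** Uo = mat 1" using U1 by (simp add: hadj_real)
  have oU': "Uo ** transpose Uo = mat 1" using oU matrix_left_right_inverse by blast
  define So where "So = (\<chi> i j. if i = j then d i else (0::real))"
  have SoG: "transpose Uo ** G ** Uo = So" using U2 by (simp add: hadj_real So_def)
  have dpos: "d i \<ge> 1" for i
    using gram_posdef[OF oU cg' u s, of i] SoG by (simp add: So_def)
  have GU: "G = Uo ** So ** transpose Uo"
  proof -
    have "Uo ** So ** transpose Uo = (Uo ** transpose Uo) ** G ** (Uo ** transpose Uo)"
      unfolding SoG[symmetric] by (simp add: matrix_mul_assoc)
    then show ?thesis using oU' by simp
  qed
  have ex: "\<exists>L Uo So. orthogonal_matrix Uo
       \<and> (\<forall>i j. i \<noteq> j \<longrightarrow> So $ i $ j = 0) \<and> (\<forall>i. So $ i $ i \<ge> 0)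
       \<and> gram A C A C = Uo ** So ** transpose Uo
       \<and> L = Uo ** (\<chi> i j. sqrt (So $ i $ j))"
    using oU GU dpos unfolding G_def
    by (intro exI[of _ "Uo ** (\<chi> i j. sqrt (So $ i $ j))"] exI[of _ Uo] exI[of _ So]) (auto simp: orthogonal_matrix So_def intro: order_trans[OF zero_le_one])
  obtain Uo' So' where W: "orthogonal_matrix Uo'" "\<forall>i j. i \<noteq> j \<longrightarrow> So' $ i $ j = 0"
      "\<forall>i. So' $ i $ i \<ge> 0" "G = Uo' ** So' ** transpose Uo'"
      "Lfac A C = Uo' ** (\<chi> i j. sqrt (So' $ i $ j))"
    using someI_ex[OF ex] unfolding Lfac_def[symmetric] G_def by blast
  have oW: "transpose Uo' ** Uo' = mat 1" "Uo' ** transpose Uo' = mat 1"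
    using W(1) by (auto simp: orthogonal_matrix_def)
  have SoW: "So' = transpose Uo' ** G ** Uo'"
    unfolding W(4) by (simp add: matrix_mul_assoc oW) (simp add: matrix_mul_assoc[symmetric] oW)
  have spos: "So' $ i $ i \<ge> 1" for i using gram_posdef[OF oW(1) cg' u s, of i] SoW by simp
  have Sod: "So' = gdiag (\<chi> i. So' $ i $ i)"
    using W(2) by (auto simp: gdiag_def vec_eq_iff)
  define Sq where "Sq = gdiag (\<chi> i. sqrt (So' $ i $ i))"
  have SqE: "(\<chi> i j. sqrt (So' $ i $ j)) = Sq"
    using W(2) by (auto simp: Sq_def gdiag_def vec_eq_iff)
  have SqSq: "Sq ** transpose Sq = So'"
    unfolding Sq_def transpose_gdiag gdiag_mult using W(3)
    by (subst Sod) (simp add: vec_eq_iff)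
  have L: "Lfac A C = Uo' ** Sq" using W(5) SqE by simp
  show "Lfac A C ** transpose (Lfac A C) = gram A C A C"
  proof -
    have "Lfac A C ** transpose (Lfac A C) = Uo' ** (Sq ** transpose Sq) ** transpose Uo'"
      by (simp add: L matrix_transpose_mul matrix_mul_assoc)
    then show ?thesis using SqSq W(4) G_def by simp
  qed
  define Li where "Li = gdiag (\<chi> i. 1 / sqrt (So' $ i $ i)) ** transpose Uo'"
  have "Sq ** gdiag (\<chi> i. 1 / sqrt (So' $ i $ i)) = mat 1"
  proof -
    have "sqrt (So' $ i $ i) \<noteq> 0" for i using spos[of i] by simp
    then show ?thesis unfolding Sq_def gdiag_mult gdiag_one[symmetric] by (simp add: vec_eq_iff)
  qed
  then have "Lfac A C ** Li = mat 1"
    unfolding L Li_def by (simp add: matrix_mul_assoc[symmetric] oW)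
    (simp add: matrix_mul_assoc oW)
  then show "invertible (Lfac A C)" using invertible_right_inverse by blast
qed

definition kform :: "complex^'n \<Rightarrow> complex^'n^'m \<Rightarrow> complex^'n \<Rightarrow> complex^'n^'m \<Rightarrow> real" where
  "kform l1 U1 l2 U2 = (\<Sum>k\<in>UNIV. \<Sum>l\<in>UNIV. (1 - (cmod (l1$k))\<^sup>2) * (1 - (cmod (l2$l))\<^sup>2)
      * (cmod ((adj U1 ** U2)$k$l))\<^sup>2 / (cmod (1 - cnj (l1$k) * l2$l))\<^sup>2)"

definition dinv :: "complex^'n \<Rightarrow> complex^'n" where
  "dinv l = (\<chi> k. complex_of_real (1 - (cmod (l$k))\<^sup>2))"

lemma dvec_dinv:
  assumes "\<And>k. cmod (l$k) < 1"
  shows "cdiag (dvec l) ** cdiag (dinv l) = mat 1"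
proof -
  have ne: "1 - (cmod (l$k))\<^sup>2 \<noteq> 0" for k
  proof -
    have "(cmod (l$k))\<^sup>2 < 1" using assms[of k] by (simp add: abs_square_less_1)
    then show ?thesis by simp
  qed
  have "dvec l $ i * dinv l $ i = 1" for i
  proof -
    have r: "1 / (1 - (cmod (l$i))\<^sup>2) * (1 - (cmod (l$i))\<^sup>2) = 1" using ne[of i] by simp
    show ?thesis unfolding dvec_def dinv_def vec_lambda_beta of_real_mult[symmetric] r by simp
  qed
  then have "(\<chi> i. dvec l $ i * dinv l $ i) = (\<chi> i. 1)" by simp
  then show ?thesis unfolding cdiag_mult by (simp add: cdiag_one)
qed

lemma N_gram:
  fixes A :: "real^'n^'n" and C :: "real^'n^'m"
  assumes cg: "cpx (gram A C A C) = P ** cdiag (dvec l) ** adj P"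
    and u: "unitary P" and s: "\<And>k. cmod (l$k) < 1"
  defines "N \<equiv> cpx (matrix_inv (Lfac A C)) ** P"
  shows "adj N ** N = cdiag (dinv l)"
proof -
  define L where "L = Lfac A C"
  define Li where "Li = matrix_inv L"
  define G where "G = gram A C A C"
  have LL: "L ** transpose L = G" and inv: "invertible L"
    using Lfac_props[OF cg u s] by (simp_all add: L_def G_def)
  have LLi: "L ** Li = mat 1" using invertible_inv[OF inv] by (simp add: Li_def)
  define Z where "Z = adj (cpx Li) ** cpx Li"
  have "transpose Li ** Li ** G = mat 1"
  proof -
    have "transpose Li ** Li ** G = transpose Li ** (Li ** L) ** transpose L"
      by (simp add: LL[symmetric] matrix_mul_assoc)
    also have "Li ** L = mat 1" using invertible_inv[OF inv] by (simp add: Li_def)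
    finally have "transpose Li ** Li ** G = transpose (L ** Li)"
      by (simp add: matrix_transpose_mul)
    then show ?thesis using LLi by simp
  qed
  then have ZG: "Z ** cpx G = mat 1"
    by (simp add: Z_def cpx_transpose[symmetric] cpx_mult[symmetric])
  have PD: "cpx G ** P = P ** cdiag (dvec l)"
    using cg u unfolding unitary_def G_def by (simp add: matrix_mul_assoc[symmetric])
  have NN: "adj N ** N = adj P ** Z ** P"
    by (simp add: N_def Z_def adj_mult matrix_mul_assoc Li_def L_def)
  have "adj N ** N ** cdiag (dvec l) = mat 1"
  proof -
    have "adj N ** N ** cdiag (dvec l) = adj P ** Z ** (P ** cdiag (dvec l))"
      by (simp add: NN matrix_mul_assoc)
    also have "\<dots> = adj P ** (Z ** cpx G) ** P" by (simp add: PD[symmetric] matrix_mul_assoc)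
    also have "\<dots> = mat 1" using ZG u by (simp add: unitary_def)
    finally show ?thesis .
  qed
  then have "adj N ** N ** (cdiag (dvec l) ** cdiag (dinv l)) = cdiag (dinv l)"
    by (simp add: matrix_mul_assoc)
  then show ?thesis using dvec_dinv[OF s] by simp
qed

lemma right_diag_entry: "(X ** gdiag b) $ i $ j = X $ i $ j * b $ j"
  for X :: "'a::comm_semiring_1^'n^'m"
proof -
  have "(X ** gdiag b) $ i $ j = (\<Sum>k\<in>UNIV. X$i$k * (if k = j then b$k else 0))"
    by (simp add: matrix_matrix_mult_def gdiag_def)
  also have "\<dots> = (\<Sum>k\<in>UNIV. if k = j then X$i$j * b$j else 0)" by (rule sum.cong) auto
  finally show ?thesis by simp
qed

lemma trace_adj: "trace (cpx M ** adj (cpx M)) = complex_of_real (frob2 M)"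
  by (simp add: trace_def frob2_def matrix_matrix_mult_def adj_def cpx_def power2_eq_square)

lemma trace_KDKD:
  "trace (K ** cdiag a ** adj K ** cdiag b) = (\<Sum>i\<in>UNIV. \<Sum>l\<in>UNIV. K$i$l * (a$l * cnj (K$i$l)) * b$i)"
proof -
  have "trace (K ** cdiag a ** adj K ** cdiag b) = (\<Sum>i\<in>UNIV. (K ** cdiag a ** adj K)$i$i * b$i)"
    unfolding trace_def cdiag_gdiag right_diag_entry ..
  also have "\<dots> = (\<Sum>i\<in>UNIV. (\<Sum>l\<in>UNIV. K$i$l * (a$l * cnj (K$i$l))) * b$i)"
    unfolding cdiag_gdiag mid_diag_entry by (simp add: adj_def)
  finally show ?thesis by (simp add: sum_distrib_right)
qed

lemma kernel_formula:
  fixes A1 A2 :: "real^'n^'n" and C1 C2 :: "real^'n^'m"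
  assumes u1: "unitary P1" and a1: "cpx A1 = P1 ** cdiag l1 ** adj P1" and c1: "cpx C1 = U1 ** adj P1"
    and s1: "\<And>k. cmod (l1$k) < 1" and uu1: "adj U1 ** U1 = mat 1"
    and u2: "unitary P2" and a2: "cpx A2 = P2 ** cdiag l2 ** adj P2" and c2: "cpx C2 = U2 ** adj P2"
    and s2: "\<And>k. cmod (l2$k) < 1" and uu2: "adj U2 ** U2 = mat 1"
  shows "kernel (A1, C1) (A2, C2) = kform l1 U1 l2 U2"
proof -
  define K where "K = (\<chi> k l. (adj U1 ** U2)$k$l / (1 - cnj (l1$k) * l2$l))"
  define G12 where "G12 = (\<chi> i j. Re ((P1 ** K ** adj P2)$i$j))"
  note gs = gram_sums[OF u1 a1 c1 u2 a2 c2 s1 s2, folded K_def G12_def]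
  note cg1 = gram_self(2)[OF u1 a1 c1 s1 uu1]
  note cg2 = gram_self(2)[OF u2 a2 c2 s2 uu2]
  define Li1 where "Li1 = matrix_inv (Lfac A1 C1)"
  define Li2 where "Li2 = matrix_inv (Lfac A2 C2)"
  define N1 where "N1 = cpx Li1 ** P1"
  define N2 where "N2 = cpx Li2 ** P2"
  have NN1: "adj N1 ** N1 = cdiag (dinv l1)" unfolding N1_def Li1_def by (rule N_gram[OF cg1 u1 s1])
  have NN2: "adj N2 ** N2 = cdiag (dinv l2)" unfolding N2_def Li2_def by (rule N_gram[OF cg2 u2 s2])
  define M where "M = Li1 ** G12 ** transpose Li2"
  have "(\<lambda>t. transpose (Vblk A1 C1 t) ** Vblk A2 C2 t)
        = (\<lambda>t. Li1 ** (transpose (obs A1 C1 t) ** obs A2 C2 t) ** transpose Li2)"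
    by (simp add: Vblk_def matrix_transpose_mul matrix_mul_assoc Li1_def Li2_def)
  then have "(\<lambda>t. transpose (Vblk A1 C1 t) ** Vblk A2 C2 t) sums M"
    unfolding M_def using sums_sandwich[OF gs(1)] by simp
  then have kM: "kernel (A1, C1) (A2, C2) = frob2 M" by (simp add: kernel_def sums_iff)
  have cM: "cpx M = N1 ** K ** adj N2"
    by (simp add: M_def cpx_mult cpx_transpose gs(2) N1_def N2_def adj_mult matrix_mul_assoc)
  have "complex_of_real (frob2 M) = trace (cpx M ** adj (cpx M))" by (simp add: trace_adj)
  also have "cpx M ** adj (cpx M) = N1 ** (K ** (adj N2 ** N2) ** adj K ** adj N1)"
    by (simp add: cM adj_mult matrix_mul_assoc)
  also have "trace \<dots> = trace (K ** (adj N2 ** N2) ** adj K ** (adj N1 ** N1))"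
    by (subst trace_mul_sym) (simp add: matrix_mul_assoc)
  also have "\<dots> = trace (K ** cdiag (dinv l2) ** adj K ** cdiag (dinv l1))" by (simp add: NN1 NN2)
  also have "\<dots> = (\<Sum>i\<in>UNIV. \<Sum>l\<in>UNIV. K$i$l * (dinv l2$l * cnj (K$i$l)) * dinv l1$i)"
    by (rule trace_KDKD)
  also have "\<dots> = complex_of_real (kform l1 U1 l2 U2)"
  proof -
    have "K$i$l * (dinv l2$l * cnj (K$i$l)) * dinv l1$i
        = complex_of_real ((1 - (cmod (l1$i))\<^sup>2) * (1 - (cmod (l2$l))\<^sup>2)
            * (cmod ((adj U1 ** U2)$i$l))\<^sup>2 / (cmod (1 - cnj (l1$i) * l2$l))\<^sup>2)" for i l
    proof -
      have "K$i$l * cnj (K$i$l) = complex_of_real ((cmod (K$i$l))\<^sup>2)"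
        using cj_mult_self'[of "K$i$l"] by (simp add: cj_complex_def mult.commute)
      moreover have "cmod (K$i$l) = cmod ((adj U1 ** U2)$i$l) / cmod (1 - cnj (l1$i) * l2$l)"
        by (simp add: K_def norm_divide)
      ultimately have "K$i$l * cnj (K$i$l) = complex_of_real ((cmod ((adj U1 ** U2)$i$l))\<^sup>2 / (cmod (1 - cnj (l1$i) * l2$l))\<^sup>2)"
        by (simp add: power_divide)
      moreover have "K$i$l * (dinv l2$l * cnj (K$i$l)) * dinv l1$i = (K$i$l * cnj (K$i$l)) * dinv l2$l * dinv l1$i"
        by (simp only: mult_ac)
      ultimately show ?thesis by (simp add: dinv_def)
    qed
    then show ?thesis by (simp add: kform_def)
  qed
  finally show ?thesis using kM by (simp only: of_real_eq_iff)
qed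

lemma quad_ip: "quad u S = ip u (S *v u)"
  by (simp add: quad_def ip_def cj_complex_def)

lemma quad_add: "quad u (S + T) = quad u S + quad u T"
  by (simp add: quad_ip matrix_vector_mult_def ip_def vec_eq_iff distrib_left distrib_right sum.distrib)

lemma quad_diff: "quad u (S - T) = quad u S - quad u T"
  by (simp add: quad_def matrix_vector_mult_def right_diff_distrib left_diff_distrib sum_subtractf)

lemma quad_scaleR: "quad u (c *\<^sub>R S) = complex_of_real c * quad u S"
proof -
  have "((c *\<^sub>R S) *v u) $ i = of_real c * (S *v u) $ i" for i
    unfolding matrix_vector_mult_def vec_lambda_beta vector_scaleR_component
    by (simp add: sum_distrib_left scaleR_conv_of_real mult.assoc)
  then show ?thesis by (simp add: quad_ip ip_def sum_distrib_left mult_ac)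
qed

lemma quad_zero_mat[simp]: "quad u 0 = 0"
  by (simp add: quad_def matrix_vector_mult_def)

lemma quad_sum: "quad u (sum f A) = (\<Sum>a\<in>A. quad u (f a))"
  by (induction A rule: infinite_finite_induct) (simp_all add: quad_add)

lemma quad_UDU: "quad u (U ** cdiag e ** adj U) = (\<Sum>l\<in>UNIV. e$l * (cnj ((adj U *v u)$l) * (adj U *v u)$l))"
proof -
  define w where "w = adj U *v u"
  have "quad u (U ** cdiag e ** adj U) = ip u (U *v (cdiag e *v w))"
    by (simp add: quad_ip w_def matrix_vector_mul_assoc matrix_mul_assoc)
  also have "\<dots> = ip w (cdiag e *v w)" by (simp add: ip_matrix w_def adj_hadj)
  also have "\<dots> = (\<Sum>l\<in>UNIV. e$l * (cnj (w$l) * w$l))"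
  proof -
    have "(cdiag e *v w) $ l = e$l * w$l" for l
    proof -
      have "(cdiag e *v w) $ l = (\<Sum>q\<in>UNIV. if q = l then e$l * w$l else 0)"
        unfolding cdiag_def matrix_vector_mult_def vec_lambda_beta by (rule sum.cong) auto
      then show ?thesis by simp
    qed
    then show ?thesis by (simp add: ip_def cj_complex_def mult_ac)
  qed
  finally show ?thesis by (simp add: w_def)
qed

lemma quad_F:
  "quad (column k U1) (Fmat U2 (l1$k) l2) = complex_of_real (\<Sum>l\<in>UNIV. (1 - (cmod (l1$k))\<^sup>2) * (1 - (cmod (l2$l))\<^sup>2)
      * (cmod ((adj U1 ** U2)$k$l))\<^sup>2 / (cmod (1 - cnj (l1$k) * l2$l))\<^sup>2)"
proof -
  define w where "w = adj U2 *v column k U1"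
  have wB: "w $ l = cnj ((adj U1 ** U2)$k$l)" for l
    by (simp add: w_def adj_def matrix_vector_mult_def matrix_matrix_mult_def column_def mult.commute)
  have den: "cmod (1 - l1$k * cnj (l2$l)) = cmod (1 - cnj (l1$k) * l2$l)" for l
  proof -
    have "cnj (1 - l1$k * cnj (l2$l)) = 1 - cnj (l1$k) * l2$l" by simp
    then show ?thesis by (metis complex_mod_cnj)
  qed
  have cm: "cnj x * x = complex_of_real ((cmod x)\<^sup>2)" for x
    using cj_mult_self'[of x] by (simp add: cj_complex_def)
  have "quad (column k U1) (Fmat U2 (l1$k) l2)
      = (\<Sum>l\<in>UNIV. complex_of_real ((1 - (cmod (l1$k))\<^sup>2) * (1 - (cmod (l2$l))\<^sup>2) / (cmod (1 - l1$k * cnj (l2$l)))\<^sup>2)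
            * (cnj (w$l) * w$l))"
    unfolding Fmat_def Emat_def quad_UDU w_def[symmetric] by simp
  also have "\<dots> = (\<Sum>l\<in>UNIV. complex_of_real ((1 - (cmod (l1$k))\<^sup>2) * (1 - (cmod (l2$l))\<^sup>2)
      * (cmod ((adj U1 ** U2)$k$l))\<^sup>2 / (cmod (1 - cnj (l1$k) * l2$l))\<^sup>2))"
  proof (rule sum.cong[OF refl])
    fix l
    have cw: "cnj (w$l) * w$l = complex_of_real ((cmod ((adj U1 ** U2)$k$l))\<^sup>2)"
      unfolding wB using cj_mult_self'[of "(adj U1 ** U2)$k$l"] by (simp add: cj_complex_def mult.commute)
    show "complex_of_real ((1 - (cmod (l1$k))\<^sup>2) * (1 - (cmod (l2$l))\<^sup>2) / (cmod (1 - l1$k * cnj (l2$l)))\<^sup>2)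
            * (cnj (w$l) * w$l)
        = complex_of_real ((1 - (cmod (l1$k))\<^sup>2) * (1 - (cmod (l2$l))\<^sup>2)
      * (cmod ((adj U1 ** U2)$k$l))\<^sup>2 / (cmod (1 - cnj (l1$k) * l2$l))\<^sup>2)"
      unfolding cw of_real_mult[symmetric] den by (simp add: field_simps)
  qed
  finally show ?thesis by simp
qed

lemma quad_kform: "(\<Sum>k\<in>UNIV. quad (column k U1) (Fmat U2 (l1$k) l2)) = complex_of_real (kform l1 U1 l2 U2)"
  unfolding quad_F kform_def by simp

lemma sum_rearr:
  fixes c :: "'i \<Rightarrow> 'a::comm_ring_1"
  shows "(\<Sum>k\<in>K. \<Sum>i\<in>I. c i * ((\<Sum>j\<in>JJ. d j i * q j k) - q' i k))
       = (\<Sum>i\<in>I. c i * ((\<Sum>j\<in>JJ. d j i * (\<Sum>k\<in>K. q j k)) - (\<Sum>k\<in>K. q' i k)))"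
proof -
  have "(\<Sum>k\<in>K. \<Sum>i\<in>I. c i * ((\<Sum>j\<in>JJ. d j i * q j k) - q' i k))
      = (\<Sum>i\<in>I. \<Sum>k\<in>K. c i * ((\<Sum>j\<in>JJ. d j i * q j k) - q' i k))" by (rule sum.swap)
  also have "\<dots> = (\<Sum>i\<in>I. c i * ((\<Sum>k\<in>K. \<Sum>j\<in>JJ. d j i * q j k) - (\<Sum>k\<in>K. q' i k)))"
    by (simp add: sum_distrib_left[symmetric] sum_subtractf)
  also have "\<dots> = (\<Sum>i\<in>I. c i * ((\<Sum>j\<in>JJ. d j i * (\<Sum>k\<in>K. q j k)) - (\<Sum>k\<in>K. q' i k)))"
    by (simp add: sum.swap[of _ K JJ] sum_distrib_left)
  finally show ?thesis .
qed

lemma kernel_can: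
  fixes A1 A2 :: "real^'n^'n" and C1 C2 :: "real^'n^'m"
  assumes ad1: "admissible sk1 A1 C1" and cn1: "canonical A1 C1 l1 U1"
    and ad2: "admissible sk2 A2 C2" and cn2: "canonical A2 C2 l2 U2"
  shows "kernel (A1, C1) (A2, C2) = kform l1 U1 l2 U2"
proof -
  obtain P1 where P1: "unitary P1" "cpx A1 = P1 ** cdiag l1 ** adj P1" "cpx C1 = U1 ** adj P1"
    using canon_P[OF cn1] by metis
  obtain P2 where P2: "unitary P2" "cpx A2 = P2 ** cdiag l2 ** adj P2" "cpx C2 = U2 ** adj P2"
    using canon_P[OF cn2] by metis
  have st1: "strictly_stable A1" "transpose C1 ** C1 = mat 1" using ad1 by (auto simp: admissible_def)
  have st2: "strictly_stable A2" "transpose C2 ** C2 = mat 1" using ad2 by (auto simp: admissible_def)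
  show ?thesis
    by (rule kernel_formula[OF P1 canon_stable[OF st1(1) cn1] canon_U[OF st1(2) cn1]
          P2 canon_stable[OF st2(1) cn2] canon_U[OF st2(2) cn2]])
qed

theorem theorem2:
  fixes sk :: bool and N J r :: nat and z :: "nat \<Rightarrow> nat \<Rightarrow> real"
    and X D :: "nat \<Rightarrow> (real^'n^'n) \<times> (real^'n^'m)"
    and lamX lamD :: "nat \<Rightarrow> complex^'n" and UX UD :: "nat \<Rightarrow> complex^'n^'m"
  assumes "r < J"
    and "\<forall>i<N. admissible sk (fst (X i)) (snd (X i))"
    and "\<forall>j<J. j \<noteq> r \<longrightarrow> admissible sk (fst (D j)) (snd (D j))"
    and "\<forall>i<N. canonical (fst (X i)) (snd (X i)) (lamX i) (UX i)"
    and "\<forall>j<J. j \<noteq> r \<longrightarrow> canonical (fst (D j)) (snd (D j)) (lamD j) (UD j)"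
  shows "\<forall>(A::real^'n^'n) (C::real^'n^'m). admissible sk A C \<longrightarrow>
           (\<exists>lam U. canonical A C lam U) \<and>
           (\<forall>lam U. canonical A C lam U \<longrightarrow>
              adj U ** U = mat 1 \<and> (\<forall>k. cmod (lam $ k) < 1) \<and>
              complex_of_real (Gamma z X (D(r := (A, C))) N J r)
                = (\<Sum>k\<in>UNIV. quad (column k U) (Smat z lamX UX lamD UD N J r lam k)))"
proof (intro allI impI)
  fix A :: "real^'n^'n" and C :: "real^'n^'m"
  assume adm: "admissible sk A C"
  have st: "strictly_stable A" "transpose C ** C = mat 1" using adm by (auto simp: admissible_def)
  show "(\<exists>lam U. canonical A C lam U) \<and>
           (\<forall>lam U. canonical A C lam U \<longrightarrow>
              adj U ** U = mat 1 \<and> (\<forall>k. cmod (lam $ k) < 1) \<and>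
              complex_of_real (Gamma z X (D(r := (A, C))) N J r)
                = (\<Sum>k\<in>UNIV. quad (column k U) (Smat z lamX UX lamD UD N J r lam k)))"
  proof (rule conjI)
    show "\<exists>lam U. canonical A C lam U" by (rule canon_exists[OF adm])
  next
    show "\<forall>lam U. canonical A C lam U \<longrightarrow>
              adj U ** U = mat 1 \<and> (\<forall>k. cmod (lam $ k) < 1) \<and>
              complex_of_real (Gamma z X (D(r := (A, C))) N J r)
                = (\<Sum>k\<in>UNIV. quad (column k U) (Smat z lamX UX lamD UD N J r lam k))"
  proof (intro allI impI conjI)
    fix lam U assume can: "canonical A C lam U"
    show "adj U ** U = mat 1" by (rule canon_U[OF st(2) can])
    show "cmod (lam $ k) < 1" for k using canon_stable[OF st(1) can] .
    have kD: "kernel (A, C) (D j) = kform lam U (lamD j) (UD j)" if "j \<in> {..<J} - {r}" for j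
    proof -
      have "admissible sk (fst (D j)) (snd (D j))" "canonical (fst (D j)) (snd (D j)) (lamD j) (UD j)"
        using that assms by auto
      from kernel_can[OF adm can this] show ?thesis by simp
    qed
    have kX: "kernel (A, C) (X i) = kform lam U (lamX i) (UX i)" if "i \<in> {..<N}" for i
    proof -
      have "admissible sk (fst (X i)) (snd (X i))" "canonical (fst (X i)) (snd (X i)) (lamX i) (UX i)"
        using that assms by auto
      from kernel_can[OF adm can this] show ?thesis by simp
    qed
    have G: "Gamma z X (D(r := (A, C))) N J r
        = (\<Sum>i<N. z r i * ((\<Sum>j\<in>{..<J} - {r}. z j i * kform lam U (lamD j) (UD j)) - kform lam U (lamX i) (UX i)))"
      unfolding Gamma_def using kD kX by (intro sum.cong refl) auto
    have Q: "quad (column k U) (Smat z lamX UX lamD UD N J r lam k)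
        = (\<Sum>i<N. complex_of_real (z r i) * ((\<Sum>j\<in>{..<J} - {r}. complex_of_real (z j i)
              * quad (column k U) (Fmat (UD j) (lam $ k) (lamD j)))
            - quad (column k U) (Fmat (UX i) (lam $ k) (lamX i))))" for k
      by (simp add: Smat_def quad_sum quad_scaleR quad_diff)
    have "(\<Sum>k\<in>UNIV. quad (column k U) (Smat z lamX UX lamD UD N J r lam k))
        = (\<Sum>i<N. complex_of_real (z r i) * ((\<Sum>j\<in>{..<J} - {r}. complex_of_real (z j i)
              * (\<Sum>k\<in>UNIV. quad (column k U) (Fmat (UD j) (lam $ k) (lamD j))))
            - (\<Sum>k\<in>UNIV. quad (column k U) (Fmat (UX i) (lam $ k) (lamX i)))))"
      unfolding Q by (rule sum_rearr)
    also have "\<dots> = complex_of_real (Gamma z X (D(r := (A, C))) N J r)"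
      unfolding G quad_kform by simp
    finally show "complex_of_real (Gamma z X (D(r := (A, C))) N J r)
                = (\<Sum>k\<in>UNIV. quad (column k U) (Smat z lamX UX lamD UD N J r lam k))" by simp
  qed
  qed
qed

end
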